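(* Let $H=(V,E,\omega,d)$ be a generalized hypergraph with $V=\{1,\dots,n\}$. For every $\rho\in R_n$ there exists a symmetric matrix $N_{\rho,z}\in M_n(K(z))$ such that for every real $\lambda>0$ the entries of $N_{\rho,z}$ have no pole at $z=\lambda$, the evaluated matrix $N_{\rho,\lambda}$ has non-negative entries, and $N_{\rho,\lambda}\,g=f$ for every $f\in U_\rho$ and every $g\in G_\lambda(f)$.
   Context: A generalized hypergraph $H=(V,E,\omega,d)$ consists of a finite set $V=\{1,\dots,n\}$, a set $E$ of nonempty subsets of $V$, a function $\omega\colon E\to\mathbb{R}_{>0}$ and a function $d\colon V\to\mathbb{R}_{>0}$, $x\mapsto d_x$ (no relation between $d$ and $\omega$ is assumed). Functions $V\to\mathbb{R}$ are identified with vectors $f=(f_1,\dots,f_n)^\top\in\mathbb{R}^n$; $\delta_x$ is the $x$-th standard basis vector. For $e\in E$, $B_e=\mathrm{Conv}\{\delta_x-\delta_y : x,y\in e\}$, and $L(f)=\{\sum_{e\in E}\omega_e\mathtt{b}_e(\mathtt{b}_e^\top f) : \mathtt{b}_e\in\operatorname{argmax}_{\mathtt b\in B_e}\mathtt b^\top f\}\subset\mathbb{R}^n$ (sums of sets are Minkowski sums). $D=\mathrm{diag}(d_1,\dots,d_n)$. $\mathbb{R}^n=\bigsqcup_{\rho\in R_n}U_\rho$ is the partition into order-pattern classes: $f,g$ lie in the same $U_\rho$ iff $\mathrm{sgn}(f_x-f_y)=\mathrm{sgn}(g_x-g_y)$ for all $x,y\in V$. $K=\mathbb{Q}(\{\omega_e\}_{e\in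 E},\{d_x\}_{x\in V})\subset\mathbb{R}$ is the subfield generated by the weights, and $K(z)$ the field of rational functions in $z$ over $K$. For $\lambda>0$, $G_\lambda\colon\mathbb{R}^n\to2^{\mathbb{R}^n}$ is $G_\lambda(f)=(D+\lambda L)(f)=\{Df+\lambda v: v\in L(f)\}$. *)

theory Defs
  imports "HOL-Analysis.Analysis" "HOL-Computational_Algebra.Polynomial"
begin

text \<open>Vertices are the elements of a finite type 'n (so V has n = CARD('n) elements);
functions V -> R are vectors real^'n.\<close>

definition gen_hypergraph :: "'n::finite set set \<Rightarrow> ('n set \<Rightarrow> real) \<Rightarrow> ('n \<Rightarrow> real) \<Rightarrow> bool" where
  "gen_hypergraph E \<omega> d \<longleftrightarrow> (\<forall>e\<in>E. e \<noteq> {}) \<and> (\<forall>e\<in>E. \<omega> e > 0) \<and> (\<forall>x. d x > 0)"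

definition is_real_subfield :: "real set \<Rightarrow> bool" where
  "is_real_subfield S \<longleftrightarrow> 0 \<in> S \<and> 1 \<in> S \<and>
     (\<forall>a\<in>S. \<forall>b\<in>S. a + b \<in> S \<and> a * b \<in> S) \<and> (\<forall>a\<in>S. - a \<in> S) \<and>
     (\<forall>a\<in>S. a \<noteq> 0 \<longrightarrow> inverse a \<in> S)"

definition gen_field :: "real set \<Rightarrow> real set" where
  "gen_field A = \<Inter>{S. is_real_subfield S \<and> A \<subseteq> S}"

definition weight_field :: "'n set set \<Rightarrow> ('n set \<Rightarrow> real) \<Rightarrow> ('n \<Rightarrow> real) \<Rightarrow> real set" where
  "weight_field E \<omega> d = gen_field (\<omega> ` E \<union> range d)"

definition Bset :: "'n::finite set \<Rightarrow> (real^'n) set" where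
  "Bset e = convex hull {axis x 1 - axis y 1 | x y. x \<in> e \<and> y \<in> e}"

definition hL :: "'n::finite set set \<Rightarrow> ('n set \<Rightarrow> real) \<Rightarrow> real^'n \<Rightarrow> (real^'n) set" where
  "hL E \<omega> f = {\<Sum>e\<in>E. (\<omega> e * (b e \<bullet> f)) *\<^sub>R b e | b.
      \<forall>e\<in>E. b e \<in> Bset e \<and> (\<forall>b'\<in>Bset e. b' \<bullet> f \<le> b e \<bullet> f)}"

definition Dmul :: "('n::finite \<Rightarrow> real) \<Rightarrow> real^'n \<Rightarrow> real^'n" where
  "Dmul d f = (\<chi> x. d x * f $ x)"

definition G_lam :: "'n::finite set set \<Rightarrow> ('n set \<Rightarrow> real) \<Rightarrow> ('n \<Rightarrow> real) \<Rightarrow> real \<Rightarrow> real^'n \<Rightarrow> (real^'n) set" where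
  "G_lam E \<omega> d lam f = {Dmul d f + lam *\<^sub>R v | v. v \<in> hL E \<omega> f}"

text \<open>Order-pattern classes U_rho; R_n is the set of all of them.\<close>
definition order_class :: "real^'n::finite \<Rightarrow> (real^'n) set" where
  "order_class f0 = {g. \<forall>x y. sgn (g $ x - g $ y) = sgn (f0 $ x - f0 $ y)}"

definition order_classes :: "(real^'n::finite) set set" where
  "order_classes = range order_class"

text \<open>Elements of K(z) represented as fractions p/q of real polynomials with
coefficients in K and q nonzero.\<close>
definition in_Kz :: "real set \<Rightarrow> real poly \<times> real poly \<Rightarrow> bool" where
  "in_Kz K r \<longleftrightarrow> snd r \<noteq> 0 \<and> (\<forall>i. coeff (fst r) i \<in> K \<and> coeff (snd r) i \<in> K)"

definition rat_eq :: "real poly \<times> real poly \<Rightarrow> real poly \<times> real poly \<Rightarrow> bool" where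
  "rat_eq r s \<longleftrightarrow> fst r * snd s = fst s * snd r"

definition rat_eval :: "real poly \<times> real poly \<Rightarrow> real \<Rightarrow> real" where
  "rat_eval r z = poly (fst r) z / poly (snd r) z"

definition eval_mat :: "('n::finite \<Rightarrow> 'n \<Rightarrow> real poly \<times> real poly) \<Rightarrow> real \<Rightarrow> real^'n^'n" where
  "eval_mat N z = (\<chi> i j. rat_eval (N i j) z)"

end

theory Submission
  imports Defs
begin


definition ue :: "('e \<Rightarrow> 'n) \<Rightarrow> ('e \<Rightarrow> 'n) \<Rightarrow> 'e \<Rightarrow> 'n \<Rightarrow> real" where
  "ue p m e i = (if i = p e then 1 else 0) - (if i = m e then 1 else 0)"

definition Amat :: "('n::finite \<Rightarrow> real) \<Rightarrow> 'e set \<Rightarrow> ('e \<Rightarrow> real) \<Rightarrow> ('e \<Rightarrow> 'n) \<Rightarrow> ('e \<Rightarrow> 'n) \<Rightarrow> real \<Rightarrow> real^'n^'n" where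
  "Amat c E w p m z = (\<chi> i j. (if i = j then c i else 0) + z * (\<Sum>e\<in>E. w e * ue p m e i * ue p m e j))"

lemma ue_sum: "(\<Sum>j\<in>UNIV. ue p m e j * x $ j) = x $ (p e) - x $ (m e)"
proof -
  have "(\<Sum>j\<in>UNIV. ue p m e j * x $ j) = (\<Sum>j\<in>UNIV. (if j = p e then x$j else 0)) - (\<Sum>j\<in>UNIV. (if j = m e then x$j else 0))"
    unfolding ue_def left_diff_distrib sum_subtractf by (intro arg_cong2[where f="(-)"] sum.cong) auto
  then show ?thesis by simp
qed

lemma Amat_mult:
  "(Amat c E w p m z *v x) $ i = c i * x $ i + z * (\<Sum>e\<in>E. w e * ue p m e i * (x $ (p e) - x $ (m e)))"
proof -
  have "(Amat c E w p m z *v x) $ i = (\<Sum>j\<in>UNIV. ((if i = j then c i else 0) + z * (\<Sum>e\<in>E. w e * ue p m e i * ue p m e j)) * x $ j)"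
    by (simp add: Amat_def matrix_vector_mult_def)
  also have "\<dots> = (\<Sum>j\<in>UNIV. (if i = j then c i else 0) * x $ j) + z * (\<Sum>j\<in>UNIV. \<Sum>e\<in>E. w e * ue p m e i * (ue p m e j * x $ j))"
    by (simp add: algebra_simps sum.distrib sum_distrib_left sum_distrib_right)
  also have "(\<Sum>j\<in>UNIV. \<Sum>e\<in>E. w e * ue p m e i * (ue p m e j * x $ j)) = (\<Sum>e\<in>E. w e * ue p m e i * (\<Sum>j\<in>UNIV. ue p m e j * x $ j))"
    by (subst sum.swap) (simp add: sum_distrib_left)
  also have "(\<Sum>j\<in>UNIV. (if i = j then c i else 0) * x $ j) = (\<Sum>j\<in>UNIV. (if i = j then c i * x $ j else 0))"
    by (intro sum.cong) auto
  finally show ?thesis by (simp add: ue_sum)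
qed

lemma Amat_minprinciple:
  fixes x :: "real^'n::finite"
  assumes fin: "finite E" and c: "\<And>i. c i > 0" and w: "\<And>e. e \<in> E \<Longrightarrow> w e \<ge> 0" and z: "z \<ge> 0"
    and nn: "\<And>i. (Amat c E w p m z *v x) $ i \<ge> 0"
  shows "x $ i \<ge> 0"
proof -
  have "\<exists>i0. \<forall>j. x $ i0 \<le> x $ j"
  proof -
    have "Min (range (($) x)) \<in> range (($) x)" by (intro Min_in) auto
    then obtain i0 where "Min (range (($) x)) = x $ i0" by (metis rangeE)
    then show ?thesis
    proof (intro exI allI)
      fix j assume "Min (range (($) x)) = x $ i0"
      then show "x $ i0 \<le> x $ j" using Min_le[of "range (($) x)" "x $ j"] by simp
    qed
  qed
  then obtain i0 where i0: "\<And>j. x $ i0 \<le> x $ j" by blast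
  have "x $ i0 \<ge> 0"
  proof (rule ccontr)
    assume neg: "\<not> x $ i0 \<ge> 0"
    have t: "w e * ue p m e i0 * (x $ (p e) - x $ (m e)) \<le> 0" if "e \<in> E" for e
    proof -
      have "ue p m e i0 * (x $ (p e) - x $ (m e)) \<le> 0"
        using i0[of "p e"] i0[of "m e"] by (auto simp: ue_def)
      then show ?thesis using w[OF that] by (metis mult.assoc mult_nonneg_nonpos)
    qed
    have "(\<Sum>e\<in>E. w e * ue p m e i0 * (x $ (p e) - x $ (m e))) \<le> 0"
      by (rule sum_nonpos) (use t in auto)
    then have "z * (\<Sum>e\<in>E. w e * ue p m e i0 * (x $ (p e) - x $ (m e))) \<le> 0"
      using z by (simp add: mult_nonneg_nonpos)
    moreover have "c i0 * x $ i0 < 0" using c[of i0] neg by (simp add: mult_pos_neg)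
    ultimately have "(Amat c E w p m z *v x) $ i0 < 0" by (simp add: Amat_mult)
    with nn[of i0] show False by simp
  qed
  then show ?thesis using i0[of i] by simp
qed

lemma Amat_inj:
  fixes x :: "real^'n::finite"
  assumes fin: "finite E" and c: "\<And>i. c i > 0" and w: "\<And>e. e \<in> E \<Longrightarrow> w e \<ge> 0" and z: "z \<ge> 0"
    and h: "Amat c E w p m z *v x = 0"
  shows "x = 0"
proof -
  have a: "x $ i \<ge> 0" for i
    by (rule Amat_minprinciple[where c=c and w=w and p=p and m=m and z=z and E=E]) (use fin c w z h in auto)
  have hm: "Amat c E w p m z *v (-x) = 0"
  proof -
    have "Amat c E w p m z *v (-x) = - (Amat c E w p m z *v x)"
      by (simp add: matrix_vector_mult_def vec_eq_iff sum_negf)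
    then show ?thesis using h by simp
  qed
  have b: "(-x) $ i \<ge> 0" for i
    by (rule Amat_minprinciple[where c=c and w=w and p=p and m=m and z=z and E=E]) (use fin c w z hm in auto)
  show ?thesis
  proof (rule vec_eq_iff[THEN iffD2], rule allI)
    fix i have "x $ i \<ge> 0" "- (x $ i) \<ge> 0" using a[of i] b[of i] by auto
    then show "x $ i = 0 $ i" by simp
  qed
qed

lemma Amat_det:
  assumes fin: "finite E" and c: "\<And>i. c i > 0" and w: "\<And>e. e \<in> E \<Longrightarrow> w e \<ge> 0" and z: "z \<ge> 0"
  shows "det (Amat c E w p m z) \<noteq> 0"
proof -
  let ?A = "Amat c E w p m z"
  have "inj ((*v) ?A)"
  proof (rule injI)
    fix x y assume "?A *v x = ?A *v y"
    then have "?A *v (x - y) = 0" by (simp add: matrix_vector_mult_diff_distrib)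
    then show "x = y" using Amat_inj[OF fin c w z] by force
  qed
  then show ?thesis
    using det_nz_iff_inj[of "(*v) ?A"] matrix_vector_mul_linear[of ?A] by simp
qed

lemma Amat_sym: "transpose (Amat c E w p m z) = Amat c E w p m z"
  by (simp add: Amat_def transpose_def vec_eq_iff mult.commute mult.left_commute)



lemma gen_field_sub: "is_real_subfield (gen_field A)"
  unfolding gen_field_def is_real_subfield_def by auto

lemma gen_field_incl: "A \<subseteq> gen_field A"
  unfolding gen_field_def by auto

lemma subfield_sum:
  assumes "is_real_subfield K" "\<And>x. x \<in> S \<Longrightarrow> f x \<in> K"
  shows "(\<Sum>x\<in>S. f x) \<in> K"
  using assms(2)
proof (induction S rule: infinite_finite_induct)
  case (infinite A) then show ?case using assms(1) by (simp add: is_real_subfield_def)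
next
  case empty then show ?case using assms(1) by (simp add: is_real_subfield_def)
next
  case (insert x F) then show ?case using assms(1) by (simp add: is_real_subfield_def)
qed

lemma subfield_prod:
  assumes "is_real_subfield K" "\<And>x. x \<in> S \<Longrightarrow> f x \<in> K"
  shows "(\<Prod>x\<in>S. f x) \<in> K"
  using assms(2)
proof (induction S rule: infinite_finite_induct)
  case (infinite A) then show ?case using assms(1) by (simp add: is_real_subfield_def)
next
  case empty then show ?case using assms(1) by (simp add: is_real_subfield_def)
next
  case (insert x F) then show ?case using assms(1) by (simp add: is_real_subfield_def)
qed

lemma subfield_of_nat: "is_real_subfield K \<Longrightarrow> of_nat n \<in> K"
  by (induction n) (auto simp: is_real_subfield_def)

lemma subfield_of_int:
  assumes K: "is_real_subfield K" shows "of_int k \<in> K"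
proof (cases k rule: int_cases)
  case (nonneg n) then show ?thesis using subfield_of_nat[OF K, of n] by simp
next
  case (neg n)
  have "of_nat (Suc n) \<in> K" using subfield_of_nat[OF K] .
  then have "- of_nat (Suc n) \<in> K" using K by (simp add: is_real_subfield_def del: of_nat_Suc)
  then show ?thesis using neg by (metis of_int_minus of_int_of_nat_eq)
qed

definition polyK :: "real set \<Rightarrow> real poly \<Rightarrow> bool" where
  "polyK K p \<longleftrightarrow> (\<forall>i. coeff p i \<in> K)"

lemma polyK_add: "is_real_subfield K \<Longrightarrow> polyK K p \<Longrightarrow> polyK K q \<Longrightarrow> polyK K (p + q)"
  by (simp add: polyK_def is_real_subfield_def)

lemma polyK_mult: "is_real_subfield K \<Longrightarrow> polyK K p \<Longrightarrow> polyK K q \<Longrightarrow> polyK K (p * q)"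
  unfolding polyK_def coeff_mult
  by (intro allI subfield_sum) (auto simp: is_real_subfield_def)

lemma polyK_of_int: "is_real_subfield K \<Longrightarrow> polyK K (of_int k)"
  using subfield_of_int[of K k] by (auto simp: polyK_def of_int_poly coeff_pCons split: nat.split)
    (auto simp: is_real_subfield_def)

lemma polyK_sum: "is_real_subfield K \<Longrightarrow> (\<And>x. x \<in> S \<Longrightarrow> polyK K (f x)) \<Longrightarrow> polyK K (\<Sum>x\<in>S. f x)"
  unfolding polyK_def coeff_sum by (intro allI subfield_sum) auto

lemma polyK_prod: "is_real_subfield K \<Longrightarrow> (\<And>x. x \<in> S \<Longrightarrow> polyK K (f x)) \<Longrightarrow> polyK K (\<Prod>x\<in>S. f x)"
proof (induction S rule: infinite_finite_induct)
  case (infinite A) then show ?case using polyK_of_int[of K 1] by simp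
next
  case empty then show ?case using polyK_of_int[of K 1] by simp
next
  case (insert x F) then show ?case using polyK_mult by simp
qed

lemma polyK_det:
  assumes K: "is_real_subfield K" and B: "\<And>i j. polyK K (B $ i $ j)"
  shows "polyK K (det B)"
  unfolding det_def
  by (intro polyK_sum[OF K] polyK_mult[OF K] polyK_of_int[OF K] polyK_prod[OF K] B)

lemma polyK_pCons2: "a \<in> K \<Longrightarrow> b \<in> K \<Longrightarrow> is_real_subfield K \<Longrightarrow> polyK K [:a, b:]"
  by (auto simp: polyK_def coeff_pCons is_real_subfield_def split: nat.split)

lemma poly_det: "poly (det B) z = det (\<chi> i j. poly (B $ i $ j) z)"
  unfolding det_def by (simp add: poly_sum poly_prod)



lemma hull_face:
  fixes f w b :: "real^'n::finite"
  assumes S: "finite S" and b: "b \<in> convex hull S" and le: "\<forall>s\<in>S. s \<bullet> f \<le> D" and ge: "D \<le> b \<bullet> f"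
    and cond: "\<forall>s\<in>S. s \<bullet> f = D \<longrightarrow> s \<bullet> w = c"
  shows "b \<bullet> w = c"
proof -
  obtain u where u0: "\<forall>x\<in>S. 0 \<le> u x" and u1: "sum u S = 1" and ub: "(\<Sum>x\<in>S. u x *\<^sub>R x) = b"
    using b unfolding convex_hull_finite[OF S] by blast
  have bf: "b \<bullet> f = (\<Sum>x\<in>S. u x * (x \<bullet> f))" and bw: "b \<bullet> w = (\<Sum>x\<in>S. u x * (x \<bullet> w))"
    using ub by (auto simp: inner_sum_left)
  have e1: "(\<Sum>x\<in>S. u x * (D - x \<bullet> f)) = D - b \<bullet> f"
    by (simp add: right_diff_distrib sum_subtractf bf flip: sum_distrib_right) (simp add: u1)
  have nn: "\<forall>x\<in>S. 0 \<le> u x * (D - x \<bullet> f)" using u0 le by simp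
  have "(\<Sum>x\<in>S. u x * (D - x \<bullet> f)) = 0"
  proof -
    have "0 \<le> (\<Sum>x\<in>S. u x * (D - x \<bullet> f))" using nn by (intro sum_nonneg) auto
    then show ?thesis using e1 ge by linarith
  qed
  moreover have "((\<Sum>x\<in>S. u x * (D - x \<bullet> f)) = 0) = (\<forall>x\<in>S. u x * (D - x \<bullet> f) = 0)"
    by (rule sum_nonneg_eq_0_iff[OF S]) (use nn in auto)
  ultimately have z: "\<forall>x\<in>S. u x * (D - x \<bullet> f) = 0" by simp
  have "\<forall>x\<in>S. u x * (x \<bullet> w - c) = 0"
  proof
    fix x assume x: "x \<in> S"
    show "u x * (x \<bullet> w - c) = 0"
    proof (cases "u x = 0")
      case False then have "x \<bullet> f = D" using z x by auto
      then show ?thesis using cond x by auto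
    qed simp
  qed
  then have "(\<Sum>x\<in>S. u x * (x \<bullet> w - c)) = 0" by (intro sum.neutral) blast
  moreover have "(\<Sum>x\<in>S. u x * (x \<bullet> w - c)) = (\<Sum>x\<in>S. u x * (x \<bullet> w)) - sum u S * c"
    by (simp add: right_diff_distrib sum_subtractf sum_distrib_right)
  ultimately have "(\<Sum>x\<in>S. u x * (x \<bullet> w)) - sum u S * c = 0" by simp
  then show ?thesis using bw u1 by simp
qed

definition Gens :: "'n::finite set \<Rightarrow> (real^'n) set" where
  "Gens e = {axis x 1 - axis y 1 | x y. x \<in> e \<and> y \<in> e}"

lemma Gens_finite: "finite (Gens e)"
proof -
  have "Gens e \<subseteq> (\<lambda>(x,y). axis x 1 - axis y 1) ` UNIV" unfolding Gens_def by auto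
  then show ?thesis by (rule finite_subset) simp
qed

lemma inner_gen: "(axis x 1 - axis y 1) \<bullet> (f :: real^'n::finite) = f $ x - f $ y"
  by (simp add: inner_diff_left inner_axis')

lemma edge_lemma:
  fixes f w b :: "real^'n::finite"
  assumes xp: "xp \<in> e" and xm: "xm \<in> e" and fp: "\<forall>y\<in>e. f $ y \<le> f $ xp" and fm: "\<forall>y\<in>e. f $ xm \<le> f $ y"
    and b: "b \<in> Bset e" and bmax: "\<forall>b'\<in>Bset e. b' \<bullet> f \<le> b \<bullet> f"
    and wp: "\<forall>x\<in>e. f $ x = f $ xp \<longrightarrow> w $ x = w $ xp"
    and wm: "\<forall>x\<in>e. f $ x = f $ xm \<longrightarrow> w $ x = w $ xm"
  shows "b \<bullet> f = f $ xp - f $ xm" and "(f $ xp - f $ xm) * (b \<bullet> w) = (f $ xp - f $ xm) * (w $ xp - w $ xm)"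
proof -
  have bh: "b \<in> convex hull (Gens e)" using b unfolding Bset_def Gens_def .
  have le: "\<forall>s\<in>Gens e. s \<bullet> f \<le> f $ xp - f $ xm"
  proof
    fix s assume "s \<in> Gens e"
    then obtain x y where xy: "s = axis x 1 - axis y 1" "x \<in> e" "y \<in> e" unfolding Gens_def by auto
    have "f $ x \<le> f $ xp" "f $ xm \<le> f $ y" using fp fm xy by auto
    then show "s \<bullet> f \<le> f $ xp - f $ xm" using xy by (simp add: inner_gen)
  qed
  have "axis xp 1 - axis xm 1 \<in> Bset e"
    unfolding Bset_def by (rule hull_inc) (use xp xm in auto)
  then have ge: "f $ xp - f $ xm \<le> b \<bullet> f" using bmax inner_gen[of xp xm f] by metis
  show "b \<bullet> f = f $ xp - f $ xm"
    by (rule hull_face[OF Gens_finite bh le ge]) simp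
  show "(f $ xp - f $ xm) * (b \<bullet> w) = (f $ xp - f $ xm) * (w $ xp - w $ xm)"
  proof (cases "f $ xp - f $ xm = 0")
    case False
    have "b \<bullet> w = w $ xp - w $ xm"
    proof (rule hull_face[OF Gens_finite bh le ge], rule ballI, rule impI)
      fix s assume s: "s \<in> Gens e" and sf: "s \<bullet> f = f $ xp - f $ xm"
      then obtain x y where xy: "s = axis x 1 - axis y 1" "x \<in> e" "y \<in> e" unfolding Gens_def by auto
      have "f $ x - f $ y = f $ xp - f $ xm" using sf xy by (simp add: inner_gen)
      moreover have "f $ x \<le> f $ xp" "f $ xm \<le> f $ y" using fp fm xy by auto
      ultimately have "f $ x = f $ xp" "f $ y = f $ xm" by linarith+
      then show "s \<bullet> w = w $ xp - w $ xm" using wp wm xy by (simp add: inner_gen)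
    qed
    then show ?thesis by simp
  qed simp
qed



lemma Amat_inverse:
  fixes p m :: "'e \<Rightarrow> 'n::finite"
  assumes fin: "finite E" and c: "\<And>i. c i > 0" and w: "\<And>e. e \<in> E \<Longrightarrow> w e \<ge> 0" and z: "z \<ge> 0"
  defines "A \<equiv> Amat c E w p m z"
  defines "X \<equiv> (\<chi> k j. det (\<chi> i l. if l = k then axis j 1 $ i else A$i$l) / det A) :: real^'n::finite^'n"
  shows "A ** X = mat 1" "transpose X = X" "X$k$j \<ge> 0"
proof -
  have dA: "det A \<noteq> 0" unfolding A_def by (rule Amat_det[OF fin c w z])
  have col: "A *v column j X = axis j 1" for j
  proof -
    have "column j X = (\<chi> k. det (\<chi> i l. if l = k then axis j 1 $ i else A$i$l) / det A)"
      by (simp add: column_def X_def)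
    then show ?thesis using cramer[OF dA] by blast
  qed
  show AX: "A ** X = mat 1"
  proof (rule vec_eq_iff[THEN iffD2], rule allI, rule vec_eq_iff[THEN iffD2], rule allI)
    fix i j
    have "(A ** X)$i$j = (A *v column j X) $ i"
      by (simp add: matrix_matrix_mult_def matrix_vector_mult_def column_def)
    then show "(A ** X)$i$j = mat 1 $i$j" using col[of j] by (simp add: axis_def mat_def)
  qed
  have As: "transpose A = A" unfolding A_def by (rule Amat_sym)
  have "transpose X = transpose X ** (A ** X)" using AX by simp
  also have "\<dots> = (transpose X ** transpose A) ** X" using As by (simp add: matrix_mul_assoc)
  also have "\<dots> = X" using AX by (simp add: matrix_transpose_mul[symmetric])
  finally show "transpose X = X" .
  have "(column j X) $ k \<ge> 0"
    by (rule Amat_minprinciple[where c=c and w=w and p=p and m=m and z=z and E=E])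
      (use fin c w z col[of j] in \<open>auto simp: A_def axis_def\<close>)
  then show "X$k$j \<ge> 0" by (simp add: column_def)
qed

lemma sgn_facts:
  fixes a b :: real
  assumes "sgn a = sgn b" shows "(a = 0 \<longleftrightarrow> b = 0)" "(a \<le> 0 \<longleftrightarrow> b \<le> 0)"
  using assms by (auto simp: sgn_if split: if_splits)

lemma ex_max_real: "finite (e::'a set) \<Longrightarrow> e \<noteq> {} \<Longrightarrow> \<exists>x\<in>e. \<forall>y\<in>e. (g y::real) \<le> g x"
proof -
  assume fe: "finite e" "e \<noteq> {}"
  then have "Max (g ` e) \<in> g ` e" by (intro Max_in) auto
  then obtain x where x: "x \<in> e" "Max (g ` e) = g x" by auto
  show ?thesis
  proof (intro bexI[OF _ x(1)] ballI)
    fix y assume "y \<in> e" then show "g y \<le> g x" using Max_ge[of "g ` e" "g y"] fe x by auto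
  qed
qed

lemma ex_min_real: "finite (e::'a set) \<Longrightarrow> e \<noteq> {} \<Longrightarrow> \<exists>x\<in>e. \<forall>y\<in>e. g x \<le> (g y::real)"
  using ex_max_real[of e "\<lambda>x. - g x"] by auto



theorem mainTheorem17:
  fixes E :: "'n::finite set set" and \<omega> :: "'n set \<Rightarrow> real" and d :: "'n \<Rightarrow> real"
  assumes "gen_hypergraph E \<omega> d"
  shows "\<forall>U \<in> (order_classes :: (real^'n) set set).
    \<exists>N :: 'n \<Rightarrow> 'n \<Rightarrow> real poly \<times> real poly.
      (\<forall>i j. in_Kz (weight_field E \<omega> d) (N i j)) \<and>
      (\<forall>i j. rat_eq (N i j) (N j i)) \<and>
      (\<forall>lam > 0.
         (\<forall>i j. poly (snd (N i j)) lam \<noteq> 0) \<and>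
         (\<forall>i j. rat_eval (N i j) lam \<ge> 0) \<and>
         (\<forall>f \<in> U. \<forall>g \<in> G_lam E \<omega> d lam f. eval_mat N lam *v g = f))"
proof (intro ballI)
  fix U assume "U \<in> (order_classes :: (real^'n) set set)"
  then obtain f0 :: "real^'n" where U: "U = order_class f0" unfolding order_classes_def by auto
  define K where "K = weight_field E \<omega> d"
  have Kf: "is_real_subfield K" unfolding K_def weight_field_def by (rule gen_field_sub)
  have incl: "\<omega> ` E \<union> range d \<subseteq> K" unfolding K_def weight_field_def by (rule gen_field_incl)
  have dK: "d x \<in> K" for x using incl by auto
  have wK: "\<omega> e \<in> K" if "e \<in> E" for e using incl that by auto
  have ne: "e \<noteq> {}" if "e \<in> E" for e using assms that unfolding gen_hypergraph_def by auto
  have wpos: "\<omega> e > 0" if "e \<in> E" for e using assms that unfolding gen_hypergraph_def by auto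
  have dpos: "d x > 0" for x using assms unfolding gen_hypergraph_def by auto
  have w0: "\<omega> e \<ge> 0" if "e \<in> E" for e using wpos[OF that] by simp
  have finE: "finite E" by (rule finite_subset[OF subset_UNIV]) simp
  define rr where "rr x = (SOME y. f0$y = f0$x)" for x
  have rr1: "f0 $ (rr x) = f0 $ x" for x unfolding rr_def by (rule someI[where x=x]) (rule refl)
  have rr2: "f0$x = f0$y \<Longrightarrow> rr x = rr y" for x y unfolding rr_def by simp
  have rr3: "rr (rr x) = rr x" for x by (rule rr2[OF rr1])
  define xp where "xp e = (SOME x. x \<in> e \<and> (\<forall>y\<in>e. f0$y \<le> f0$x))" for e
  define xm where "xm e = (SOME x. x \<in> e \<and> (\<forall>y\<in>e. f0$x \<le> f0$y))" for e
  have xp: "xp e \<in> e \<and> (\<forall>y\<in>e. f0$y \<le> f0$(xp e))" if "e \<in> E" for e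
    unfolding xp_def by (rule someI_ex) (use ex_max_real[of e "\<lambda>y. f0$y"] ne[OF that] in auto)
  have xm: "xm e \<in> e \<and> (\<forall>y\<in>e. f0$(xm e) \<le> f0$y)" if "e \<in> E" for e
    unfolding xm_def by (rule someI_ex) (use ex_min_real[of e "\<lambda>y. f0$y"] ne[OF that] in auto)
  define p where "p e = rr (xp e)" for e
  define m where "m e = rr (xm e)" for e
  define c where "c a = (if rr a = a then (\<Sum>y\<in>{y. rr y = a}. d y) else 1)" for a
  have cpos: "c a > 0" for a
  proof (cases "rr a = a")
    case True
    have "(\<Sum>y\<in>{y. rr y = a}. d y) > 0" by (rule sum_pos) (use True dpos in auto)
    then show ?thesis using True by (simp add: c_def)
  qed (simp add: c_def)
  have cK: "c a \<in> K" for a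
    unfolding c_def using subfield_sum[OF Kf, of "{y. rr y = a}" d] dK Kf by (auto simp: is_real_subfield_def)
  define Lq where "Lq i j = (\<Sum>e\<in>E. \<omega> e * ue p m e i * ue p m e j)" for i j
  have ueK: "ue p m e i \<in> K" for e i unfolding ue_def using Kf by (auto simp: is_real_subfield_def)
  have LqK: "Lq i j \<in> K" for i j
    unfolding Lq_def by (rule subfield_sum[OF Kf]) (use Kf wK ueK in \<open>auto simp: is_real_subfield_def\<close>)
  define Mpol :: "real poly^'n^'n" where "Mpol = (\<chi> i j. [: (if i = j then c i else 0), Lq i j :])"
  define q where "q = det Mpol"
  define P where "P k j = det (\<chi> i l. if l = k then (if i = j then 1 else 0) else Mpol$i$l)" for k j
  define N where "N i j = (P (rr i) (rr j), q)" for i j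
  have evA: "(\<chi> i j. poly (Mpol$i$j) z) = Amat c E \<omega> p m z" for z
    by (simp add: Mpol_def Amat_def Lq_def vec_eq_iff)
  have evq: "poly q z = det (Amat c E \<omega> p m z)" for z unfolding q_def poly_det evA ..
  have evP: "poly (P k j) z = det (\<chi> i l. if l = k then axis j 1 $ i else Amat c E \<omega> p m z $ i $ l)" for k j z
    unfolding P_def poly_det by (rule arg_cong[where f=det]) (auto simp: vec_eq_iff Mpol_def Amat_def Lq_def axis_def)
  have polyKM: "polyK K (Mpol $ i $ j)" for i j
    unfolding Mpol_def using polyK_pCons2[OF _ LqK Kf] cK Kf by (auto simp: is_real_subfield_def)
  have qK: "polyK K q" unfolding q_def by (rule polyK_det[OF Kf polyKM])
  have PK: "polyK K (P k j)" for k j unfolding P_def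
    by (rule polyK_det[OF Kf]) (use polyKM polyK_of_int[OF Kf, of 1] polyK_of_int[OF Kf, of 0] in auto)
  have qnz: "poly q lam \<noteq> 0" if "lam > 0" for lam
    unfolding evq using Amat_det[where c=c and w=\<omega> and E=E, OF finE cpos w0] that by simp
  have q0: "q \<noteq> 0" using qnz[of 1] by auto
  define X :: "real \<Rightarrow> real^'n^'n" where "X lam = (\<chi> k j. det (\<chi> i l. if l = k then axis j 1 $ i else Amat c E \<omega> p m lam $i$l) / det (Amat c E \<omega> p m lam))" for lam
  have Xinv: "Amat c E \<omega> p m lam ** X lam = mat 1" "transpose (X lam) = X lam" "X lam $k$j \<ge> 0" if "lam > 0" for lam k j
    using Amat_inverse[where c=c and w=\<omega> and E=E and z=lam and p=p and m=m, OF finE cpos w0] that unfolding X_def by auto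
  have evN: "rat_eval (N i j) lam = X lam $ rr i $ rr j" for i j lam
    by (simp add: N_def rat_eval_def evP evq X_def)
  have Psym: "P a b = P b a" for a b
  proof (rule ccontr)
    assume "P a b \<noteq> P b a"
    then have "P a b - P b a \<noteq> 0" by simp
    then have fin: "finite {x. poly (P a b - P b a) x = 0}" by (rule poly_roots_finite)
    have "{0<..} \<subseteq> {x. poly (P a b - P b a) x = 0}"
    proof
      fix lam :: real assume "lam \<in> {0<..}"
      then have l: "lam > 0" by simp
      have "poly (P a b) lam = X lam $ a $ b * poly q lam" "poly (P b a) lam = X lam $ b $ a * poly q lam"
        using qnz[OF l] by (simp_all add: evP evq X_def)
      moreover have "X lam $ a $ b = X lam $ b $ a"
        using Xinv(2)[OF l] by (metis transpose_def vec_lambda_beta)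
      ultimately show "lam \<in> {x. poly (P a b - P b a) x = 0}" by simp
    qed
    then show False using fin infinite_Ioi[of "0::real"] finite_subset by blast
  qed
  show "\<exists>N :: 'n \<Rightarrow> 'n \<Rightarrow> real poly \<times> real poly.
      (\<forall>i j. in_Kz (weight_field E \<omega> d) (N i j)) \<and>
      (\<forall>i j. rat_eq (N i j) (N j i)) \<and>
      (\<forall>lam > 0.
         (\<forall>i j. poly (snd (N i j)) lam \<noteq> 0) \<and>
         (\<forall>i j. rat_eval (N i j) lam \<ge> 0) \<and>
         (\<forall>f \<in> U. \<forall>g \<in> G_lam E \<omega> d lam f. eval_mat N lam *v g = f))"
  proof (rule exI[of _ N], intro conjI allI impI ballI)
    fix i j show "in_Kz (weight_field E \<omega> d) (N i j)"
      using PK qK q0 unfolding in_Kz_def N_def K_def polyK_def by auto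
  next
    fix i j show "rat_eq (N i j) (N j i)" unfolding rat_eq_def N_def using Psym by simp
  next
    fix lam :: real and i j assume "lam > 0" then show "poly (snd (N i j)) lam \<noteq> 0"
      using qnz by (simp add: N_def)
  next
    fix lam :: real and i j assume "lam > 0" then show "rat_eval (N i j) lam \<ge> 0"
      using Xinv(3) by (simp add: evN)
  next
    fix lam :: real and f g assume lam: "lam > 0" and fU: "f \<in> U" and gG: "g \<in> G_lam E \<omega> d lam f"
    have z0: "lam \<ge> 0" using lam by simp
    have fsg: "sgn (f$x - f$y) = sgn (f0$x - f0$y)" for x y using fU U by (simp add: order_class_def)
    have feq: "f$x = f$y \<longleftrightarrow> f0$x = f0$y" for x y using sgn_facts(1)[OF fsg[of x y]] by simp
    have fle: "f$x \<le> f$y \<longleftrightarrow> f0$x \<le> f0$y" for x y using sgn_facts(2)[OF fsg[of x y]] by simp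
    have frr: "f$(rr x) = f$x" for x using feq rr1 by blast
    obtain v where g: "g = Dmul d f + lam *\<^sub>R v" and v: "v \<in> hL E \<omega> f" using gG unfolding G_lam_def by blast
    obtain b where vb: "v = (\<Sum>e\<in>E. (\<omega> e * (b e \<bullet> f)) *\<^sub>R b e)"
      and bB: "\<forall>e\<in>E. b e \<in> Bset e \<and> (\<forall>b'\<in>Bset e. b' \<bullet> f \<le> b e \<bullet> f)" using v unfolding hL_def by blast
    have fp: "\<forall>y\<in>e. f$y \<le> f$(xp e)" if "e\<in>E" for e using xp[OF that] fle by blast
    have fm: "\<forall>y\<in>e. f$(xm e) \<le> f$y" if "e\<in>E" for e using xm[OF that] fle by blast
    have bB1: "b e \<in> Bset e" if "e\<in>E" for e using bB that by blast
    have bB2: "\<forall>b'\<in>Bset e. b' \<bullet> f \<le> b e \<bullet> f" if "e\<in>E" for e using bB that by blast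
    have xp1: "xp e \<in> e" if "e\<in>E" for e using xp[OF that] by blast
    have xm1: "xm e \<in> e" if "e\<in>E" for e using xm[OF that] by blast
    have bf: "b e \<bullet> f = f$(xp e) - f$(xm e)" if "e\<in>E" for e
      by (rule edge_lemma(1)[where w=f, OF xp1[OF that] xm1[OF that] fp[OF that] fm[OF that] bB1[OF that] bB2[OF that]]) simp_all
    define wa :: "'n \<Rightarrow> real^'n" where "wa a = (\<chi> y. if rr y = a then 1 else 0)" for a
    have bw: "(b e \<bullet> f) * (b e \<bullet> wa a) = (b e \<bullet> f) * ue p m e a" if "e\<in>E" for e a
    proof -
      have wp: "\<forall>x\<in>e. f $ x = f $ (xp e) \<longrightarrow> wa a $ x = wa a $ (xp e)"
      proof (intro ballI impI)
        fix x assume "f $ x = f $ (xp e)"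
        then have "f0 $ x = f0 $ (xp e)" using feq by blast
        then have "rr x = rr (xp e)" by (rule rr2)
        then show "wa a $ x = wa a $ (xp e)" by (simp add: wa_def)
      qed
      have wm: "\<forall>x\<in>e. f $ x = f $ (xm e) \<longrightarrow> wa a $ x = wa a $ (xm e)"
      proof (intro ballI impI)
        fix x assume "f $ x = f $ (xm e)"
        then have "f0 $ x = f0 $ (xm e)" using feq by blast
        then have "rr x = rr (xm e)" by (rule rr2)
        then show "wa a $ x = wa a $ (xm e)" by (simp add: wa_def)
      qed
      have "(f$(xp e) - f$(xm e)) * (b e \<bullet> wa a) = (f$(xp e) - f$(xm e)) * (wa a $ (xp e) - wa a $ (xm e))"
        by (rule edge_lemma(2)[OF xp1[OF that] xm1[OF that] fp[OF that] fm[OF that] bB1[OF that] bB2[OF that] wp wm])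
      moreover have "wa a $ (xp e) - wa a $ (xm e) = ue p m e a" by (auto simp: wa_def ue_def p_def m_def)
      ultimately show ?thesis using bf[OF that] by simp
    qed
    have bsum: "(\<Sum>y\<in>{y. rr y = a}. b e $ y) = b e \<bullet> wa a" for e a
    proof -
      have "b e \<bullet> wa a = (\<Sum>y\<in>UNIV. if rr y = a then b e $ y else 0)"
        unfolding inner_vec_def by (rule sum.cong) (auto simp: wa_def)
      also have "\<dots> = (\<Sum>y\<in>{y\<in>UNIV. rr y = a}. b e $ y)" by (rule sum.inter_filter[symmetric]) simp
      finally show ?thesis by simp
    qed
    define h where "h = (\<chi> a. if rr a = a then f$a else 0)"
    define Gv where "Gv = (\<chi> a. \<Sum>y\<in>{y. rr y = a}. g$y)"
    have hp: "h$(p e) - h$(m e) = b e \<bullet> f" if "e\<in>E" for e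
      by (simp add: h_def p_def m_def rr3 frr bf[OF that])
    have gy: "g$y = d y * f$y + lam * (\<Sum>e\<in>E. \<omega> e * (b e \<bullet> f) * b e $ y)" for y
      by (simp add: g vb Dmul_def sum_component)
    have Ah: "Amat c E \<omega> p m lam *v h = Gv"
    proof (rule vec_eq_iff[THEN iffD2], rule allI)
      fix a
      have "(\<Sum>e\<in>E. \<omega> e * ue p m e a * (h$(p e) - h$(m e))) = (\<Sum>e\<in>E. \<omega> e * ue p m e a * (b e \<bullet> f))"
        by (rule sum.cong) (simp_all add: hp)
      then have L: "(Amat c E \<omega> p m lam *v h)$a = c a * h$a + lam * (\<Sum>e\<in>E. \<omega> e * ue p m e a * (b e \<bullet> f))"
        by (simp add: Amat_mult)
      have "Gv$a = (\<Sum>y\<in>{y. rr y = a}. d y * f$y) + lam * (\<Sum>y\<in>{y. rr y = a}. \<Sum>e\<in>E. \<omega> e * (b e \<bullet> f) * b e $ y)"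
        by (simp add: Gv_def gy sum.distrib sum_distrib_left)
      also have "(\<Sum>y\<in>{y. rr y = a}. \<Sum>e\<in>E. \<omega> e * (b e \<bullet> f) * b e $ y) = (\<Sum>e\<in>E. \<omega> e * (b e \<bullet> f) * (\<Sum>y\<in>{y. rr y = a}. b e $ y))"
        by (subst sum.swap) (simp add: sum_distrib_left)
      finally have R: "Gv$a = (\<Sum>y\<in>{y. rr y = a}. d y * f$y) + lam * (\<Sum>e\<in>E. \<omega> e * (b e \<bullet> f) * (\<Sum>y\<in>{y. rr y = a}. b e $ y))" .
      have Dp: "(\<Sum>y\<in>{y. rr y = a}. d y * f$y) = c a * h$a"
      proof (cases "rr a = a")
        case True
        have "(\<Sum>y\<in>{y. rr y = a}. d y * f$y) = (\<Sum>y\<in>{y. rr y = a}. d y * f$a)"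
        proof (rule sum.cong[OF refl])
          fix y assume "y \<in> {y. rr y = a}"
          then have "rr y = a" by simp
          then have "f$y = f$a" using frr[of y] by simp
          then show "d y * f$y = d y * f$a" by simp
        qed
        also have "\<dots> = (\<Sum>y\<in>{y. rr y = a}. d y) * f$a" by (simp add: sum_distrib_right)
        finally show ?thesis using True by (simp add: c_def h_def)
      next
        case False
        have "{y. rr y = a} = {}" using False rr3 by auto
        then show ?thesis using False by (simp add: h_def)
      qed
      have S: "(\<Sum>e\<in>E. \<omega> e * (b e \<bullet> f) * (\<Sum>y\<in>{y. rr y = a}. b e $ y)) = (\<Sum>e\<in>E. \<omega> e * ue p m e a * (b e \<bullet> f))"
      proof (rule sum.cong[OF refl])
        fix e assume e: "e \<in> E"
        have "\<omega> e * (b e \<bullet> f) * (\<Sum>y\<in>{y. rr y = a}. b e $ y) = \<omega> e * ((b e \<bullet> f) * (b e \<bullet> wa a))"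
          by (simp add: bsum)
        also have "\<dots> = \<omega> e * ue p m e a * (b e \<bullet> f)" using bw[OF e, of a] by simp
        finally show "\<omega> e * (b e \<bullet> f) * (\<Sum>y\<in>{y. rr y = a}. b e $ y) = \<omega> e * ue p m e a * (b e \<bullet> f)" .
      qed
      show "(Amat c E \<omega> p m lam *v h)$a = Gv$a" using L R Dp S by simp
    qed
    have XG: "X lam *v Gv = h"
    proof -
      have "Amat c E \<omega> p m lam *v (X lam *v Gv) = Gv"
        by (simp add: matrix_vector_mul_assoc Xinv(1)[OF lam])
      then have "Amat c E \<omega> p m lam *v (X lam *v Gv - h) = 0" using Ah by (simp add: matrix_vector_mult_diff_distrib)
      then have "X lam *v Gv - h = 0"
        using Amat_inj[where c=c and w=\<omega> and E=E and z=lam and p=p and m=m and x="X lam *v Gv - h", OF finE cpos w0 z0] by blast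
      then show ?thesis by simp
    qed
    show "eval_mat N lam *v g = f"
    proof (rule vec_eq_iff[THEN iffD2], rule allI)
      fix x
      have "(eval_mat N lam *v g)$x = (\<Sum>y\<in>UNIV. X lam $ rr x $ rr y * g$y)"
        by (simp add: eval_mat_def matrix_vector_mult_def evN)
      also have "\<dots> = (\<Sum>a\<in>UNIV. \<Sum>y\<in>{y\<in>UNIV. rr y = a}. X lam $ rr x $ rr y * g$y)"
        by (rule sum.group[symmetric]) auto
      also have "\<dots> = (\<Sum>a\<in>UNIV. X lam $ rr x $ a * Gv$a)"
      proof (rule sum.cong[OF refl])
        fix a
        have "(\<Sum>y\<in>{y\<in>UNIV. rr y = a}. X lam $ rr x $ rr y * g$y) = (\<Sum>y\<in>{y. rr y = a}. X lam $ rr x $ a * g$y)"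
          by (rule sum.cong) auto
        then show "(\<Sum>y\<in>{y\<in>UNIV. rr y = a}. X lam $ rr x $ rr y * g$y) = X lam $ rr x $ a * Gv$a"
          by (simp add: Gv_def sum_distrib_left)
      qed
      also have "\<dots> = (X lam *v Gv)$(rr x)" by (simp add: matrix_vector_mult_def)
      also have "\<dots> = f$x" using XG by (simp add: h_def rr3 frr)
      finally show "(eval_mat N lam *v g)$x = f$x" .
    qed
  qed
qed

end
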